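(* Let $G$ be a hypo-unique domination graph of order at least $3$. Then: (i) for every $x\in V(G)$, the graph $G-x$ has no $\gamma$-critical vertices; (ii) for every pair of distinct vertices $x,y$ of $G$, $\gamma(G-\{x,y\})\geq \gamma(G)-1$, and equality holds at least when $y$ does not belong to the unique $\gamma$-set of $G-x$.
   Context: All graphs are finite, simple and undirected. A set $D\subseteq V(G)$ is dominating if every vertex of $G$ not in $D$ has a neighbor in $D$; $\gamma(G)$ is the minimum size of a dominating set, and a dominating set of size $\gamma(G)$ is a $\gamma$-set. A vertex $v$ of a graph $H$ is $\gamma$-critical in $H$ if $\gamma(H-v)<\gamma(H)$. $G$ is a hypo-unique domination graph if $G$ has at least two $\gamma$-sets but for every $v\in V(G)$ the graph $G-v$ has exactly one $\gamma$-set. *)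

theory Defs
  imports Main
begin

text \<open>Vertex-deleted
subgraphs G - S are the induced subgraphs on V - S, represented by the
vertex set W = V - S together with the same relation E.\<close>

definition simple_graph :: "'a set \<Rightarrow> ('a \<Rightarrow> 'a \<Rightarrow> bool) \<Rightarrow> bool" where
  "simple_graph V E \<longleftrightarrow> finite V \<and> (\<forall>u v. E u v \<longrightarrow> E v u) \<and> (\<forall>v. \<not> E v v)
     \<and> (\<forall>u v. E u v \<longrightarrow> u \<in> V \<and> v \<in> V)"

definition dominating :: "('a \<Rightarrow> 'a \<Rightarrow> bool) \<Rightarrow> 'a set \<Rightarrow> 'a set \<Rightarrow> bool" where
  "dominating E W D \<longleftrightarrow> D \<subseteq> W \<and> (\<forall>v \<in> W - D. \<exists>u \<in> D. E u v)"

definition gamma :: "('a \<Rightarrow> 'a \<Rightarrow> bool) \<Rightarrow> 'a set \<Rightarrow> nat" where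
  "gamma E W = Min (card ` {D. dominating E W D})"

definition gamma_set :: "('a \<Rightarrow> 'a \<Rightarrow> bool) \<Rightarrow> 'a set \<Rightarrow> 'a set \<Rightarrow> bool" where
  "gamma_set E W D \<longleftrightarrow> dominating E W D \<and> card D = gamma E W"

definition gamma_critical :: "('a \<Rightarrow> 'a \<Rightarrow> bool) \<Rightarrow> 'a set \<Rightarrow> 'a \<Rightarrow> bool" where
  "gamma_critical E W v \<longleftrightarrow> v \<in> W \<and> gamma E (W - {v}) < gamma E W"

definition hypo_unique :: "'a set \<Rightarrow> ('a \<Rightarrow> 'a \<Rightarrow> bool) \<Rightarrow> bool" where
  "hypo_unique V E \<longleftrightarrow>
     (\<exists>D1 D2. D1 \<noteq> D2 \<and> gamma_set E V D1 \<and> gamma_set E V D2) \<and>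
     (\<forall>v \<in> V. \<exists>!D. gamma_set E (V - {v}) D)"

end

theory Submission
  imports Defs
begin

lemma dom_subset: "dominating E W D \<Longrightarrow> D \<subseteq> W"
  by (simp add: dominating_def)

lemma dom_self: "dominating E W W"
  by (simp add: dominating_def)

lemma gamma_le:
  assumes "finite W" "dominating E W D"
  shows "gamma E W \<le> card D"
proof -
  have sub: "card ` {D. dominating E W D} \<subseteq> {..card W}"
    using assms by (auto simp: dominating_def intro: card_mono)
  hence "finite (card ` {D. dominating E W D})" using finite_subset by blast
  thus ?thesis unfolding gamma_def using assms(2) by (intro Min_le) auto
qed

lemma gamma_ex:
  assumes "finite W"
  shows "\<exists>D. gamma_set E W D"
proof -
  have sub: "card ` {D. dominating E W D} \<subseteq> {..card W}"
    using assms by (auto simp: dominating_def intro: card_mono)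
  hence fin: "finite (card ` {D. dominating E W D})" using finite_subset by blast
  have ne: "card ` {D. dominating E W D} \<noteq> {}" using dom_self[of E W] by blast
  have "gamma E W \<in> card ` {D. dominating E W D}"
    unfolding gamma_def using Min_in[OF fin ne] .
  then obtain D where "dominating E W D" "card D = gamma E W" by auto
  thus ?thesis unfolding gamma_set_def by blast
qed

lemma gamma_setI:
  assumes "finite W" "dominating E W D" "card D \<le> gamma E W"
  shows "gamma_set E W D"
  using gamma_le[OF assms(1,2)] assms unfolding gamma_set_def by simp

lemma dom_mono:
  "dominating E W D \<Longrightarrow> D \<subseteq> W' \<Longrightarrow> W' \<subseteq> W \<Longrightarrow> dominating E W' D"
  unfolding dominating_def by blast

lemma gamma_set_fin: "finite W \<Longrightarrow> gamma_set E W D \<Longrightarrow> finite D"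
  unfolding gamma_set_def dominating_def using finite_subset by blast

lemma gamma_del_ge:
  assumes "finite W" "z \<in> W"
  shows "gamma E W \<le> gamma E (W - {z}) + 1"
proof -
  obtain T where T: "gamma_set E (W - {z}) T" using gamma_ex[of "W - {z}" E] assms by auto
  have "dominating E W (insert z T)"
    using T unfolding gamma_set_def dominating_def using assms by blast
  hence "gamma E W \<le> card (insert z T)" using gamma_le assms by blast
  also have "\<dots> \<le> card T + 1"
    using gamma_set_fin[OF _ T] assms by (simp add: card_insert_if)
  finally show ?thesis using T unfolding gamma_set_def by simp
qed

lemma card_swap: "finite S \<Longrightarrow> a \<in> S \<Longrightarrow> p \<notin> S \<Longrightarrow> card (insert p (S - {a})) = card S"
proof -
  assume a: "finite S" "a \<in> S" "p \<notin> S"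
  have "card (insert p (S - {a})) = Suc (card (S - {a}))" using a by (intro card_insert_disjoint) auto
  also have "\<dots> = card S" using a by (intro card_Suc_Diff1) auto
  finally show ?thesis .
qed

text \<open>In a graph with a unique gamma-set S, a non-isolated vertex of S has at least two
external private neighbours.\<close>
lemma ud_two_epn:
  assumes fin: "finite W" and S: "gamma_set E W S"
    and uniq: "\<And>D. gamma_set E W D \<Longrightarrow> D = S"
    and symE: "\<And>u v. E u v \<Longrightarrow> E v u"
    and aS: "a \<in> S" and yW: "y \<in> W" and ya: "y \<noteq> a" and Eay: "E a y"
  shows "\<exists>q. q \<in> W - S \<and> q \<noteq> p \<and> E a q \<and> (\<forall>s \<in> S - {a}. \<not> E s q)"
proof (rule ccontr)
  assume nq: "\<not> ?thesis"
  let ?epn = "\<lambda>q. q \<in> W - S \<and> E a q \<and> (\<forall>s \<in> S - {a}. \<not> E s q)"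
  have only: "\<And>q. ?epn q \<Longrightarrow> q = p" using nq by blast
  have domS: "dominating E W S" and cS: "card S = gamma E W" using S unfolding gamma_set_def by auto
  have SW: "S \<subseteq> W" using domS dom_subset by blast
  have finS: "finite S" using SW fin finite_subset by blast
  show False
  proof (cases "?epn p")
    case True
    define D' where "D' = insert p (S - {a})"
    have "dominating E W D'"
      unfolding dominating_def
    proof (intro conjI ballI)
      show "D' \<subseteq> W" using SW True D'_def by auto
    next
      fix z assume z: "z \<in> W - D'"
      show "\<exists>u\<in>D'. E u z"
      proof (cases "z = a")
        case True
        thus ?thesis using \<open>?epn p\<close> symE D'_def by blast
      next
        case False
        hence "z \<in> W - S" "z \<noteq> p" using z D'_def by auto
        then obtain u where u: "u \<in> S" "E u z" using domS unfolding dominating_def by blast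
        show ?thesis
        proof (cases "u = a")
          case False thus ?thesis using u D'_def by auto
        next
          case True
          have "\<not> ?epn z" using only \<open>z \<noteq> p\<close> by blast
          then obtain s where "s \<in> S - {a}" "E s z" using \<open>z \<in> W - S\<close> u True by blast
          thus ?thesis using D'_def by auto
        qed
      qed
    qed
    moreover have "card D' = card S" unfolding D'_def using True aS finS by (intro card_swap) auto
    ultimately have "gamma_set E W D'" using fin cS by (intro gamma_setI) auto
    hence "D' = S" using uniq by blast
    thus False using True D'_def by auto
  next
    case False
    hence noepn: "\<And>q. \<not> ?epn q" using only by blast
    show False
    proof (cases "\<exists>s \<in> S - {a}. E s a")
      case True
      have "dominating E W (S - {a})"
        unfolding dominating_def
      proof (intro conjI ballI)
        show "S - {a} \<subseteq> W" using SW by auto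
      next
        fix z assume z: "z \<in> W - (S - {a})"
        show "\<exists>u\<in>S - {a}. E u z"
        proof (cases "z = a")
          case True thus ?thesis using \<open>\<exists>s \<in> S - {a}. E s a\<close> by blast
        next
          case False
          hence zz: "z \<in> W - S" using z by auto
          then obtain u where u: "u \<in> S" "E u z" using domS unfolding dominating_def by blast
          show ?thesis
          proof (cases "u = a")
            case False thus ?thesis using u by auto
          next
            case True thus ?thesis using noepn[of z] zz u by blast
          qed
        qed
      qed
      hence "gamma E W \<le> card (S - {a})" using gamma_le fin by blast
      moreover have "card (S - {a}) < card S" using finS aS by (rule card_Diff1_less)
      ultimately show False using cS by simp
    next
      case False
      have yS: "y \<notin> S" using False Eay symE ya by blast
      define D' where "D' = insert y (S - {a})"
      have "dominating E W D'"
        unfolding dominating_def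
      proof (intro conjI ballI)
        show "D' \<subseteq> W" using SW yW D'_def by auto
      next
        fix z assume z: "z \<in> W - D'"
        show "\<exists>u\<in>D'. E u z"
        proof (cases "z = a")
          case True thus ?thesis using Eay symE D'_def by blast
        next
          case False
          hence zz: "z \<in> W - S" using z D'_def by auto
          then obtain u where u: "u \<in> S" "E u z" using domS unfolding dominating_def by blast
          show ?thesis
          proof (cases "u = a")
            case False thus ?thesis using u D'_def by auto
          next
            case True
            then obtain s where "s \<in> S - {a}" "E s z" using noepn[of z] zz u by blast
            thus ?thesis using D'_def by auto
          qed
        qed
      qed
      moreover have "card D' = card S" unfolding D'_def using yS aS finS by (intro card_swap) auto
      ultimately have "gamma_set E W D'" using fin cS by (intro gamma_setI) auto
      hence "D' = S" using uniq by blast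
      thus False using yS D'_def by auto
    qed
  qed
qed

lemma ud_del_out:
  assumes fin: "finite W" and S: "gamma_set E W S"
    and uniq: "\<And>D. gamma_set E W D \<Longrightarrow> D = S"
    and z: "z \<in> W" "z \<notin> S"
  shows "gamma E (W - {z}) = gamma E W"
proof -
  have domS: "dominating E W S" and cS: "card S = gamma E W" using S unfolding gamma_set_def by auto
  have "dominating E (W - {z}) S" using domS z dom_mono[of E W S "W - {z}"] dom_subset by blast
  hence le: "gamma E (W - {z}) \<le> gamma E W" using gamma_le[of "W - {z}" E S] fin cS by simp
  obtain T where T: "gamma_set E (W - {z}) T" using gamma_ex[of "W - {z}" E] fin by auto
  show ?thesis
  proof (rule ccontr)
    assume "gamma E (W - {z}) \<noteq> gamma E W"
    hence lt: "card T < gamma E W" using le T unfolding gamma_set_def by simp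
    have "dominating E W (insert z T)"
      using T z unfolding gamma_set_def dominating_def by blast
    moreover have "card (insert z T) \<le> gamma E W"
      using lt gamma_set_fin[OF _ T] fin by (simp add: card_insert_if)
    ultimately have "gamma_set E W (insert z T)" using gamma_setI fin by blast
    hence "insert z T = S" using uniq by blast
    thus False using z by auto
  qed
qed

lemma mix:
  assumes dX: "dominating E W1 X" and dY: "dominating E W2 Y"
    and WA: "W \<inter> A \<subseteq> W1" and WB: "W \<inter> B \<subseteq> W2" and WV: "W \<subseteq> A \<union> B"
    and sub: "(X \<inter> A) \<union> (Y \<inter> B) \<subseteq> W" and YAB: "Y \<subseteq> A \<union> B" and disj: "A \<inter> B = {}"
    and nc: "\<And>u y. E u y \<Longrightarrow> (u \<in> A \<longleftrightarrow> y \<in> A)"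
  shows "dominating E W ((X \<inter> A) \<union> (Y \<inter> B))"
  unfolding dominating_def
proof (intro conjI ballI)
  show "(X \<inter> A) \<union> (Y \<inter> B) \<subseteq> W" by (rule sub)
next
  fix y assume y: "y \<in> W - ((X \<inter> A) \<union> (Y \<inter> B))"
  show "\<exists>u\<in>(X \<inter> A) \<union> (Y \<inter> B). E u y"
  proof (cases "y \<in> A")
    case True
    hence "y \<in> W1 - X" using y WA by blast
    then obtain u where "u \<in> X" "E u y" using dX unfolding dominating_def by blast
    thus ?thesis using nc True by blast
  next
    case False
    hence yB: "y \<in> B" using y WV by blast
    hence "y \<in> W2 - Y" using y WB by blast
    then obtain u where u: "u \<in> Y" "E u y" using dY unfolding dominating_def by blast
    have "u \<notin> A" using nc u False by blast
    hence "u \<in> B" using u YAB by blast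
    thus ?thesis using u by blast
  qed
qed

lemma card_split:
  assumes "finite X" "X \<subseteq> A \<union> B" "A \<inter> B = {}"
  shows "card X = card (X \<inter> A) + card (X \<inter> B)"
proof -
  have "X = (X \<inter> A) \<union> (X \<inter> B)" using assms by blast
  hence "card X = card ((X \<inter> A) \<union> (X \<inter> B))" by simp
  also have "\<dots> = card (X \<inter> A) + card (X \<inter> B)"
    using assms by (intro card_Un_disjoint) auto
  finally show ?thesis .
qed

locale HU =
  fixes V :: "'a set" and E :: "'a \<Rightarrow> 'a \<Rightarrow> bool"
  assumes sg: "simple_graph V E" and hu: "hypo_unique V E" and c3: "card V \<ge> 3"
begin

lemma finV: "finite V" using sg unfolding simple_graph_def by blast
lemma symE: "E u v \<Longrightarrow> E v u" using sg unfolding simple_graph_def by blast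
lemma irr: "\<not> E v v" using sg unfolding simple_graph_def by blast
lemma inV1: "E u v \<Longrightarrow> u \<in> V" using sg unfolding simple_graph_def by blast
lemma inV2: "E u v \<Longrightarrow> v \<in> V" using sg unfolding simple_graph_def by blast
lemma finW: "finite (V - X)" using finV by simp

definition Sx where "Sx x = (THE D. gamma_set E (V - {x}) D)"

lemma Sx: "x \<in> V \<Longrightarrow> gamma_set E (V - {x}) (Sx x)"
  unfolding Sx_def using hu unfolding hypo_unique_def by (metis theI')

lemma Sx_uniq: "x \<in> V \<Longrightarrow> gamma_set E (V - {x}) D \<Longrightarrow> D = Sx x"
  using Sx hu unfolding hypo_unique_def by blast

lemma two: "\<exists>D1 D2. D1 \<noteq> D2 \<and> gamma_set E V D1 \<and> gamma_set E V D2"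
  using hu unfolding hypo_unique_def by blast

lemma Sx_dom: "x \<in> V \<Longrightarrow> dominating E (V - {x}) (Sx x)"
  using Sx unfolding gamma_set_def by blast
lemma Sx_card: "x \<in> V \<Longrightarrow> card (Sx x) = gamma E (V - {x})"
  using Sx unfolding gamma_set_def by blast
lemma Sx_sub: "x \<in> V \<Longrightarrow> Sx x \<subseteq> V - {x}"
  using Sx_dom dom_subset by blast
lemma Sx_fin: "x \<in> V \<Longrightarrow> finite (Sx x)"
  using Sx_sub finV finite_subset by blast
lemma Sx_domv: "x \<in> V \<Longrightarrow> z \<in> V \<Longrightarrow> z \<noteq> x \<Longrightarrow> z \<notin> Sx x \<Longrightarrow> \<exists>u\<in>Sx x. E u z"
  using Sx_dom unfolding dominating_def by blast

lemma gs_dom: "gamma_set E V D \<Longrightarrow> dominating E V D" unfolding gamma_set_def by blast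
lemma gs_card: "gamma_set E V D \<Longrightarrow> card D = gamma E V" unfolding gamma_set_def by blast
lemma gs_sub: "gamma_set E V D \<Longrightarrow> D \<subseteq> V" using gs_dom dom_subset by blast
lemma gs_fin: "gamma_set E V D \<Longrightarrow> finite D" using gs_sub finV finite_subset by blast

lemma gs_del: "gamma_set E V D \<Longrightarrow> u \<notin> D \<Longrightarrow> dominating E (V - {u}) D"
proof -
  assume a: "gamma_set E V D" "u \<notin> D"
  show ?thesis by (rule dom_mono[OF gs_dom[OF a(1)]]) (use gs_sub[OF a(1)] a(2) in auto)
qed

lemma del_ge: "u \<in> V \<Longrightarrow> gamma E V \<le> gamma E (V - {u}) + 1"
  by (rule gamma_del_ge[OF finV])

lemma H1:
  assumes "gamma_set E V D1" "gamma_set E V D2" "D1 \<noteq> D2" "u \<in> V" "u \<notin> D1" "u \<notin> D2"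
  shows "gamma E (V - {u}) < gamma E V"
proof (rule ccontr)
  assume nl: "\<not> gamma E (V - {u}) < gamma E V"
  have "gamma E (V - {u}) \<le> card D1" using gs_del assms gamma_le finW by blast
  hence eq: "gamma E (V - {u}) = gamma E V" using nl gs_card assms by simp
  have "gamma_set E (V - {u}) D1" using gs_del assms eq gs_card unfolding gamma_set_def by simp
  moreover have "gamma_set E (V - {u}) D2" using gs_del assms eq gs_card unfolding gamma_set_def by simp
  ultimately show False using Sx_uniq assms by blast
qed

lemma H2:
  assumes "gamma_set E V D" "u \<in> V" "u \<notin> D" "\<not> gamma E (V - {u}) < gamma E V"
  shows "gamma E (V - {u}) = gamma E V \<and> Sx u = D"
proof -
  have "gamma E (V - {u}) \<le> card D" using gs_del assms gamma_le finW by blast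
  hence eq: "gamma E (V - {u}) = gamma E V" using assms gs_card by simp
  have "gamma_set E (V - {u}) D" using gs_del assms eq gs_card unfolding gamma_set_def by simp
  thus ?thesis using Sx_uniq assms eq by blast
qed

lemma H3a: "u \<in> V \<Longrightarrow> gamma E (V - {u}) < gamma E V \<Longrightarrow> card (Sx u) + 1 = gamma E V"
  using del_ge Sx_card by fastforce

lemma H3b:
  assumes "u \<in> V" "gamma E (V - {u}) < gamma E V" "E u y"
  shows "y \<notin> Sx u"
proof
  assume y: "y \<in> Sx u"
  have "dominating E V (Sx u)"
    unfolding dominating_def
  proof (intro conjI ballI)
    show "Sx u \<subseteq> V" using Sx_sub assms by blast
  next
    fix z assume z: "z \<in> V - Sx u"
    show "\<exists>w\<in>Sx u. E w z"
    proof (cases "z = u")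
      case True thus ?thesis using y assms symE by blast
    next
      case False thus ?thesis using Sx_domv assms z by blast
    qed
  qed
  hence "gamma E V \<le> card (Sx u)" using gamma_le finV by blast
  thus False using H3a[OF assms(1,2)] by simp
qed

lemma H3c:
  assumes "u \<in> V" "gamma E (V - {u}) < gamma E V" "y = u \<or> E u y"
  shows "gamma_set E V (insert y (Sx u))"
proof -
  have yV: "y \<in> V" using assms inV2 by blast
  have yS: "y \<notin> Sx u" using assms H3b Sx_sub by blast
  have "dominating E V (insert y (Sx u))"
    unfolding dominating_def
  proof (intro conjI ballI)
    show "insert y (Sx u) \<subseteq> V" using Sx_sub assms yV by blast
  next
    fix z assume z: "z \<in> V - insert y (Sx u)"
    show "\<exists>w\<in>insert y (Sx u). E w z"
    proof (cases "z = u")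
      case True thus ?thesis using z assms symE by blast
    next
      case False thus ?thesis using Sx_domv assms z by blast
    qed
  qed
  moreover have "card (insert y (Sx u)) = gamma E V"
    using yS Sx_fin assms H3a by simp
  ultimately show ?thesis unfolding gamma_set_def by blast
qed

lemma HL:
  assumes "y \<in> V" "v \<in> V" "y \<noteq> v" "y \<notin> Sx v" "v \<notin> Sx y"
  shows "gamma E (V - {y}) = gamma E (V - {v})"
proof -
  have 1: "gamma E (V - {v} - {y}) = gamma E (V - {v})"
    using ud_del_out[OF finW Sx[OF assms(2)] Sx_uniq[OF assms(2)], of y] assms by blast
  have 2: "gamma E (V - {y} - {v}) = gamma E (V - {y})"
    using ud_del_out[OF finW Sx[OF assms(1)] Sx_uniq[OF assms(1)], of v] assms by blast
  have "V - {v} - {y} = V - {y} - {v}" by blast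
  thus ?thesis using 1 2 by simp
qed

lemma H4:
  assumes "v \<in> V" "\<not> gamma E (V - {v}) < gamma E V" "E v y" "y \<notin> Sx v"
  shows "\<not> gamma E (V - {y}) < gamma E V"
proof -
  have yV: "y \<in> V" using assms inV2 by blast
  have yv: "y \<noteq> v" using assms irr by blast
  show ?thesis
  proof (cases "v \<in> Sx y")
    case True
    have "dominating E V (Sx y)"
      unfolding dominating_def
    proof (intro conjI ballI)
      show "Sx y \<subseteq> V" using Sx_sub yV by blast
    next
      fix z assume z: "z \<in> V - Sx y"
      show "\<exists>w\<in>Sx y. E w z"
      proof (cases "z = y")
        case True thus ?thesis using \<open>v \<in> Sx y\<close> assms by blast
      next
        case False thus ?thesis using Sx_domv yV z by blast
      qed
    qed
    hence "gamma E V \<le> card (Sx y)" using gamma_le finV by blast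
    thus ?thesis using Sx_card yV by simp
  next
    case False
    thus ?thesis using HL[OF yV assms(1) yv assms(4) False] assms by simp
  qed
qed

lemma Hleaf:
  assumes D: "gamma_set E V D" and "y \<in> D" "w \<in> D" "E y w" and only: "\<And>z. E y z \<Longrightarrow> z = w"
  shows False
proof -
  have wy: "w \<noteq> y" using assms irr by blast
  have "dominating E V (D - {y})"
    unfolding dominating_def
  proof (intro conjI ballI)
    show "D - {y} \<subseteq> V" using gs_sub D by blast
  next
    fix z assume z: "z \<in> V - (D - {y})"
    show "\<exists>u\<in>D - {y}. E u z"
    proof (cases "z = y")
      case True thus ?thesis using assms wy symE by blast
    next
      case False
      hence "z \<in> V - D" using z by blast
      then obtain u where u: "u \<in> D" "E u z" using gs_dom[OF D] unfolding dominating_def by blast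
      have "u \<noteq> y" using only u \<open>z \<in> V - D\<close> \<open>w \<in> D\<close> by blast
      thus ?thesis using u by blast
    qed
  qed
  hence "gamma E V \<le> card (D - {y})" using gamma_le finV by blast
  moreover have "card (D - {y}) < card D" using gs_fin[OF D] \<open>y \<in> D\<close> by (rule card_Diff1_less)
  ultimately show False using gs_card[OF D] by simp
qed

lemma B1:
  assumes xV: "x \<in> V" and vV: "v \<in> V" and Exv: "E x v"
    and cx: "gamma E (V - {x}) < gamma E V" and nv: "\<not> gamma E (V - {v}) < gamma E V"
  shows "v \<notin> Sx x \<and> gamma E (V - {v}) = gamma E V \<and> Sx v = insert x (Sx x)
         \<and> (\<forall>z. E x z \<longrightarrow> z = v)"
proof -
  have vS: "v \<notin> Sx x" using H3b[OF xV cx Exv] .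
  have Dx: "gamma_set E V (insert x (Sx x))" using H3c[OF xV cx] by blast
  have vx: "v \<noteq> x" using Exv irr by blast
  have "v \<notin> insert x (Sx x)" using vS vx by blast
  hence h2: "gamma E (V - {v}) = gamma E V \<and> Sx v = insert x (Sx x)"
    using H2[OF Dx vV _ nv] by blast
  have xS: "x \<notin> Sx x" using Sx_sub xV by blast
  have leaf: "z = v" if Exz: "E x z" for z
  proof (rule ccontr)
    assume zv: "z \<noteq> v"
    have zV: "z \<in> V" using Exz inV2 by blast
    have zx: "z \<noteq> x" using Exz irr by blast
    have xSv: "x \<in> Sx v" using h2 by blast
    obtain q where q: "q \<in> (V - {v}) - Sx v" "E x q" "\<forall>s \<in> Sx v - {x}. \<not> E s q"
      using ud_two_epn[OF finW Sx[OF vV] Sx_uniq[OF vV] symE xSv, of z v] zV zv zx Exz by blast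
    have "Sx v - {x} = Sx x" using h2 xS by blast
    hence nq: "\<forall>s \<in> Sx x. \<not> E s q" using q by blast
    have "q \<in> V" "q \<noteq> x" "q \<notin> Sx x" using q h2 by auto
    then obtain u where "u \<in> Sx x" "E u q" using Sx_domv[OF xV] by blast
    thus False using nq by blast
  qed
  show ?thesis using vS h2 leaf by blast
qed

lemma caseB:
  assumes xV: "x \<in> V" and vV: "v \<in> V" and Exv: "E x v"
    and cx: "gamma E (V - {x}) < gamma E V" and nv: "\<not> gamma E (V - {v}) < gamma E V"
  shows False
proof -
  note b1 = B1[OF xV vV Exv cx nv]
  have vS: "v \<notin> Sx x" and gv: "gamma E (V - {v}) = gamma E V"
    and Svx: "Sx v = insert x (Sx x)" using b1 by auto
  have vx: "v \<noteq> x" using Exv irr by blast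
  have xS: "x \<notin> Sx x" using Sx_sub xV by blast
  have Ds: "gamma_set E V (insert v (Sx x))" using H3c[OF xV cx] Exv by blast
  have Dx: "gamma_set E V (insert x (Sx x))" using H3c[OF xV cx] by blast
  have DxDs: "insert x (Sx x) \<noteq> insert v (Sx x)"
  proof
    assume "insert x (Sx x) = insert v (Sx x)"
    hence "x \<in> insert v (Sx x)" by (metis insertI1)
    thus False using vx xS by simp
  qed
  obtain w where w: "w \<in> Sx x" "E w v" using Sx_domv[OF xV vV vx vS] by blast
  have wV: "w \<in> V" using w inV1 by blast
  have wv: "w \<noteq> v" using w vS by blast
  have nw: "\<not> gamma E (V - {w}) < gamma E V"
  proof
    assume cw: "gamma E (V - {w}) < gamma E V"
    have "\<forall>z. E w z \<longrightarrow> z = v" using B1[OF wV vV w(2) cw nv] by blast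
    thus False using Hleaf[OF Ds, of w v] w by blast
  qed
  obtain q where q: "q \<in> (V - {x}) - Sx x" "q \<noteq> v" "E w q" "\<forall>s \<in> Sx x - {w}. \<not> E s q"
    using ud_two_epn[OF finW Sx[OF xV] Sx_uniq[OF xV] symE w(1), of v v] vV vx wv w(2) by blast
  have qV: "q \<in> V" and qx: "q \<noteq> x" and qS: "q \<notin> Sx x" using q by auto
  have cq: "gamma E (V - {q}) < gamma E V"
    using H1[OF Dx Ds DxDs qV] qx qS q(2) by blast
  have Eqw: "E q w" using q(3) symE by blast
  note b2 = B1[OF qV wV Eqw cq nw]
  have Swq: "Sx w = insert q (Sx q)" using b2 by blast
  have Dq: "gamma_set E V (insert w (Sx q))" using H3c[OF qV cq] Eqw by blast
  define R where "R = insert q (Sx v - {w})"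
  have wSv: "w \<in> Sx v" using Svx w by blast
  have qSv: "q \<notin> Sx v" using Svx qx qS by blast
  have cR: "card R = gamma E (V - {v})"
    unfolding R_def using card_swap[OF Sx_fin[OF vV] wSv qSv] Sx_card[OF vV] by simp
  have "dominating E (V - {v}) R"
    unfolding dominating_def
  proof (intro conjI ballI)
    show "R \<subseteq> V - {v}" unfolding R_def using Sx_sub[OF vV] qV q(2) by blast
  next
    fix z assume z: "z \<in> V - {v} - R"
    show "\<exists>u\<in>R. E u z"
    proof (cases "z = w")
      case True thus ?thesis using Eqw R_def by blast
    next
      case zw: False
      have zS: "z \<notin> Sx v" and zq: "z \<noteq> q" and zV: "z \<in> V" and zv: "z \<noteq> v"
        using z zw R_def by auto
      obtain u where u: "u \<in> Sx v" "E u z" using Sx_domv[OF vV zV zv zS] by blast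
      show ?thesis
      proof (cases "u = w")
        case False thus ?thesis using u R_def by blast
      next
        case True
        have Ezw: "E z w" using u True symE by blast
        have "z \<notin> insert x (Sx x)" using zS Svx by blast
        moreover have "z \<notin> insert v (Sx x)" using zS Svx zv by blast
        ultimately have cz: "gamma E (V - {z}) < gamma E V"
          using H1[OF Dx Ds DxDs zV] by blast
        note b3 = B1[OF zV wV Ezw cz nw]
        have "insert q (Sx q) = insert z (Sx z)" using b3 Swq by simp
        hence "z \<in> Sx q" using zq by blast
        moreover have "\<forall>t. E z t \<longrightarrow> t = w" using b3 by blast
        ultimately have False using Hleaf[OF Dq, of z w] Ezw by blast
        thus ?thesis ..
      qed
    qed
  qed
  hence "gamma_set E (V - {v}) R" using cR unfolding gamma_set_def by blast
  hence "R = Sx v" using Sx_uniq[OF vV] by blast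
  thus False using qSv R_def by blast
qed

lemma SL1:
  assumes AB: "A \<union> B = V" "A \<inter> B = {}" and z: "z \<in> A"
    and nc: "\<And>u y. E u y \<Longrightarrow> (u \<in> A \<longleftrightarrow> y \<in> A)"
    and D: "gamma_set E V D"
  shows "(Sx z \<inter> A) \<union> (D \<inter> B) = Sx z"
proof -
  have zV: "z \<in> V" using z AB by blast
  have zB: "z \<notin> B" using z AB by blast
  have SV: "Sx z \<subseteq> V" using Sx_sub[OF zV] by blast
  have DV: "D \<subseteq> V" using gs_sub[OF D] .
  have K: "dominating E V ((D \<inter> A) \<union> (Sx z \<inter> B))"
    by (rule mix[OF gs_dom[OF D] Sx_dom[OF zV]]) (use AB zB SV nc in auto)
  have cK: "card ((D \<inter> A) \<union> (Sx z \<inter> B)) = card (D \<inter> A) + card (Sx z \<inter> B)"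
    using gs_fin[OF D] Sx_fin[OF zV] AB by (intro card_Un_disjoint) auto
  have "gamma E V \<le> card ((D \<inter> A) \<union> (Sx z \<inter> B))" using gamma_le[OF finV K] .
  moreover have "card D = card (D \<inter> A) + card (D \<inter> B)"
    using card_split[OF gs_fin[OF D]] DV AB by blast
  ultimately have le1: "card (D \<inter> B) \<le> card (Sx z \<inter> B)" using cK gs_card[OF D] by simp
  have Z: "dominating E (V - {z}) ((Sx z \<inter> A) \<union> (D \<inter> B))"
    by (rule mix[OF Sx_dom[OF zV] gs_dom[OF D]]) (use AB zB Sx_sub[OF zV] DV nc in auto)
  have cZ: "card ((Sx z \<inter> A) \<union> (D \<inter> B)) = card (Sx z \<inter> A) + card (D \<inter> B)"
    using gs_fin[OF D] Sx_fin[OF zV] AB by (intro card_Un_disjoint) auto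
  have "card (Sx z) = card (Sx z \<inter> A) + card (Sx z \<inter> B)"
    using card_split[OF Sx_fin[OF zV]] SV AB by blast
  hence "card ((Sx z \<inter> A) \<union> (D \<inter> B)) \<le> gamma E (V - {z})"
    using cZ le1 Sx_card[OF zV] by simp
  hence "gamma_set E (V - {z}) ((Sx z \<inter> A) \<union> (D \<inter> B))"
    using gamma_setI[OF finW Z] by blast
  thus ?thesis using Sx_uniq[OF zV] by blast
qed

lemma SL:
  assumes AB: "A \<union> B = V" "A \<inter> B = {}" and z: "z \<in> A"
    and nc: "\<And>u y. E u y \<Longrightarrow> (u \<in> A \<longleftrightarrow> y \<in> A)"
    and D1: "gamma_set E V D1" and D2: "gamma_set E V D2" and neq: "D1 \<inter> B \<noteq> D2 \<inter> B"
  shows False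
proof -
  have 1: "(Sx z \<inter> A) \<union> (D1 \<inter> B) = Sx z" using SL1[OF AB z nc D1] .
  have 2: "(Sx z \<inter> A) \<union> (D2 \<inter> B) = Sx z" using SL1[OF AB z nc D2] .
  have "D1 \<inter> B = ((Sx z \<inter> A) \<union> (D1 \<inter> B)) \<inter> B" using AB by blast
  also have "\<dots> = ((Sx z \<inter> A) \<union> (D2 \<inter> B)) \<inter> B" using 1 2 by simp
  also have "\<dots> = D2 \<inter> B" using AB by blast
  finally show False using neq by simp
qed

lemma split:
  assumes AB: "A \<union> B = V" "A \<inter> B = {}" and a: "a \<in> A" and b: "b \<in> B"
    and nc: "\<And>u y. E u y \<Longrightarrow> (u \<in> A \<longleftrightarrow> y \<in> A)"
  shows False
proof -
  obtain D1 D2 where D: "D1 \<noteq> D2" "gamma_set E V D1" "gamma_set E V D2" using two by blast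
  have "D1 = (D1 \<inter> A) \<union> (D1 \<inter> B)" "D2 = (D2 \<inter> A) \<union> (D2 \<inter> B)"
    using gs_sub[OF D(2)] gs_sub[OF D(3)] AB by blast+
  hence "D1 \<inter> A \<noteq> D2 \<inter> A \<or> D1 \<inter> B \<noteq> D2 \<inter> B" using D(1) by metis
  thus False
  proof
    assume "D1 \<inter> A \<noteq> D2 \<inter> A"
    moreover have "B \<union> A = V" "B \<inter> A = {}" using AB by blast+
    moreover have "\<And>u y. E u y \<Longrightarrow> (u \<in> B \<longleftrightarrow> y \<in> B)"
    proof -
      fix u y assume e: "E u y"
      have "u \<in> V" "y \<in> V" using e inV1 inV2 by blast+
      thus "(u \<in> B \<longleftrightarrow> y \<in> B)" using nc[OF e] AB by blast
    qed
    ultimately show False using SL[of B A b, OF _ _ b _ D(2) D(3)] by blast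
  next
    assume "D1 \<inter> B \<noteq> D2 \<inter> B"
    thus False using SL[OF AB a nc D(2) D(3)] by blast
  qed
qed

lemma caseA:
  assumes all: "\<And>u. u \<in> V \<Longrightarrow> \<not> gamma E (V - {u}) < gamma E V"
  shows False
proof -
  obtain D1 D2 where D: "D1 \<noteq> D2" and D1: "gamma_set E V D1" and D2: "gamma_set E V D2"
    using two by blast
  have cover: "u \<in> D1 \<or> u \<in> D2" if "u \<in> V" for u
    using H1[OF D1 D2 D that] all[OF that] by blast
  have epn: "\<exists>b. b \<in> V - D1 \<and> E a b \<and> (\<forall>s \<in> D1 - {a}. \<not> E s b)" if aD: "a \<in> D1" for a
  proof (rule ccontr)
    assume ne: "\<not> ?thesis"
    have aV: "a \<in> V" using aD gs_sub[OF D1] by blast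
    have "dominating E (V - {a}) (D1 - {a})"
      unfolding dominating_def
    proof (intro conjI ballI)
      show "D1 - {a} \<subseteq> V - {a}" using gs_sub[OF D1] by blast
    next
      fix z assume z: "z \<in> V - {a} - (D1 - {a})"
      hence zz: "z \<in> V - D1" by blast
      then obtain u where u: "u \<in> D1" "E u z" using gs_dom[OF D1] unfolding dominating_def by blast
      show "\<exists>u\<in>D1 - {a}. E u z"
      proof (cases "u = a")
        case False thus ?thesis using u by blast
      next
        case True thus ?thesis using ne zz u by blast
      qed
    qed
    hence "gamma E (V - {a}) \<le> card (D1 - {a})" using gamma_le finW by blast
    moreover have "card (D1 - {a}) < card D1" using gs_fin[OF D1] aD by (rule card_Diff1_less)
    ultimately show False using all[OF aV] gs_card[OF D1] by simp
  qed
  define f where "f a = (SOME b. b \<in> V - D1 \<and> E a b \<and> (\<forall>s \<in> D1 - {a}. \<not> E s b))" for a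
  have fp: "f a \<in> V - D1 \<and> E a (f a) \<and> (\<forall>s \<in> D1 - {a}. \<not> E s (f a))" if "a \<in> D1" for a
    unfolding f_def using someI_ex[OF epn[OF that]] .
  have inj: "inj_on f D1"
  proof (rule inj_onI)
    fix a a' assume a: "a \<in> D1" "a' \<in> D1" "f a = f a'"
    show "a = a'"
    proof (rule ccontr)
      assume "a \<noteq> a'"
      hence "a' \<in> D1 - {a}" using a by blast
      hence "\<not> E a' (f a)" using fp[OF a(1)] by blast
      thus False using fp[OF a(2)] a(3) by simp
    qed
  qed
  have img: "f ` D1 \<subseteq> D2 - D1"
  proof
    fix b assume "b \<in> f ` D1"
    then obtain a where a: "a \<in> D1" "b = f a" by blast
    thus "b \<in> D2 - D1" using fp[OF a(1)] cover by blast
  qed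
  have finD2: "finite D2" using gs_fin[OF D2] .
  have "card D1 \<le> card (D2 - D1)"
    using card_inj_on_le[OF inj img] finD2 by blast
  moreover have "card D1 = card D2" using gs_card[OF D1] gs_card[OF D2] by simp
  ultimately have "card D2 \<le> card (D2 - D1)" by simp
  hence "D2 - D1 = D2" using card_seteq[OF finD2, of "D2 - D1"] by blast
  hence disj: "D1 \<inter> D2 = {}" by blast
  have "V = D1 \<union> D2" using cover gs_sub[OF D1] gs_sub[OF D2] by blast
  hence "card V = card D1 + card D2" using gs_fin[OF D1] finD2 disj card_Un_disjoint by metis
  hence c2: "card D1 \<ge> 2" using c3 \<open>card D1 = card D2\<close> by simp
  then obtain a1 where a1: "a1 \<in> D1" by fastforce
  have "card (D1 - {a1}) \<ge> 1" using c2 a1 gs_fin[OF D1] by simp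
  hence "D1 - {a1} \<noteq> {}" by (metis card.empty not_one_le_zero)
  then obtain a2 where a2: "a2 \<in> D1" "a2 \<noteq> a1" by blast
  have a1V: "a1 \<in> V" and a2V: "a2 \<in> V" using a1 a2 gs_sub[OF D1] by blast+
  have a1D2: "a1 \<notin> D2" and a2D2: "a2 \<notin> D2" using a1 a2 disj by blast+
  have h2: "gamma E (V - {a1}) = gamma E V \<and> Sx a1 = D2" using H2[OF D2 a1V a1D2 all[OF a1V]] .
  define b2 where "b2 = f a2"
  have b2: "b2 \<in> D2" "E a2 b2" "\<forall>s \<in> D1 - {a2}. \<not> E s b2"
    using fp[OF a2(1)] img a2(1) b2_def by blast+
  define Z where "Z = insert a2 (D2 - {b2})"
  have cZ: "card Z = gamma E (V - {a1})"
    unfolding Z_def using card_swap[OF finD2 b2(1) a2D2] h2 gs_card[OF D2] by simp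
  have "dominating E (V - {a1}) Z"
    unfolding dominating_def
  proof (intro conjI ballI)
    show "Z \<subseteq> V - {a1}" unfolding Z_def using gs_sub[OF D2] a1D2 a2V a2(2) by blast
  next
    fix y assume y: "y \<in> V - {a1} - Z"
    show "\<exists>u\<in>Z. E u y"
    proof (cases "y = b2")
      case True thus ?thesis using b2(2) Z_def by blast
    next
      case False
      hence yD2: "y \<in> V - D2" using y Z_def by blast
      then obtain u where u: "u \<in> D2" "E u y" using gs_dom[OF D2] unfolding dominating_def by blast
      show ?thesis
      proof (cases "u = b2")
        case False thus ?thesis using u Z_def by blast
      next
        case True
        have "y \<in> D1" using yD2 cover by blast
        moreover have "y \<noteq> a2" using y Z_def by blast
        ultimately have "\<not> E y b2" using b2(3) by blast
        thus ?thesis using u True symE by blast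
      qed
    qed
  qed
  hence "gamma_set E (V - {a1}) Z" using cZ unfolding gamma_set_def by blast
  hence "Z = D2" using Sx_uniq[OF a1V] h2 by blast
  thus False using a2D2 Z_def by blast
qed

lemma crit:
  assumes xV: "x \<in> V"
  shows "gamma E (V - {x}) < gamma E V"
proof (rule ccontr)
  assume nx: "\<not> ?thesis"
  define A where "A = {u \<in> V. \<not> gamma E (V - {u}) < gamma E V}"
  define B where "B = {u \<in> V. gamma E (V - {u}) < gamma E V}"
  show False
  proof (cases "B = {}")
    case True
    thus False using caseA B_def by blast
  next
    case False
    then obtain b where b: "b \<in> B" by blast
    show False
    proof (cases "\<exists>u y. E u y \<and> u \<in> B \<and> y \<in> A")
      case True
      then obtain u y where "E u y" "u \<in> B" "y \<in> A" by blast
      thus False using caseB[of u y] A_def B_def by blast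
    next
      case nomix: False
      have nc: "(u \<in> A \<longleftrightarrow> y \<in> A)" if e: "E u y" for u y
      proof -
        have "u \<in> V" "y \<in> V" using e inV1 inV2 by blast+
        moreover have "E y u" using e symE by blast
        ultimately show ?thesis using nomix e unfolding A_def B_def by blast
      qed
      have "A \<union> B = V" "A \<inter> B = {}" unfolding A_def B_def by blast+
      moreover have "x \<in> A" using xV nx A_def by blast
      ultimately show False using split[OF _ _ _ b nc] by blast
    qed
  qed
qed

lemma gdel: "x \<in> V \<Longrightarrow> gamma E (V - {x}) + 1 = gamma E V"
proof -
  assume xV: "x \<in> V"
  have "gamma E (V - {x}) < gamma E V" using crit[OF xV] .
  moreover have "gamma E V \<le> gamma E (V - {x}) + 1" using del_ge[OF xV] .
  ultimately show ?thesis by linarith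
qed

lemma partI:
  assumes xV: "x \<in> V"
  shows "\<not> gamma_critical E (V - {x}) w"
proof
  assume gc: "gamma_critical E (V - {x}) w"
  have wV: "w \<in> V" and wx: "w \<noteq> x" and lt: "gamma E (V - {x} - {w}) < gamma E (V - {x})"
    using gc unfolding gamma_critical_def by auto
  have finxw: "finite (V - {x} - {w})" using finV by simp
  obtain T where T: "gamma_set E (V - {x} - {w}) T" using gamma_ex[OF finxw] by blast
  have domT: "dominating E (V - {x} - {w}) T" and cT: "card T = gamma E (V - {x} - {w})"
    using T unfolding gamma_set_def by auto
  have TW: "T \<subseteq> V - {x} - {w}" using dom_subset[OF domT] .
  have finT: "finite T" using TW finV finite_subset by blast
  have "gamma E (V - {x}) \<le> gamma E (V - {x} - {w}) + 1"
    using gamma_del_ge[OF finW, of w "{x}" E] wV wx by blast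
  hence cT1: "card T + 1 = gamma E (V - {x})" using lt cT by simp
  have gx: "gamma E (V - {x}) + 1 = gamma E V" using gdel[OF xV] .
  have Tdom: "\<exists>u\<in>T. E u z" if "z \<in> V" "z \<noteq> x" "z \<noteq> w" "z \<notin> T" for z
    using domT that unfolding dominating_def by blast
  show False
  proof (cases "\<exists>y. E w y \<and> y \<noteq> x")
    case True
    then obtain y where y: "E w y" "y \<noteq> x" by blast
    have yV: "y \<in> V" using y inV2 by blast
    have yw: "y \<noteq> w" using y irr by blast
    have Eyw: "E y w" using y symE by blast
    show False
    proof (cases "y \<in> T")
      case True
      have "dominating E (V - {x}) T"
        unfolding dominating_def
      proof (intro conjI ballI)
        show "T \<subseteq> V - {x}" using TW by blast
      next
        fix z assume z: "z \<in> V - {x} - T"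
        show "\<exists>u\<in>T. E u z"
        proof (cases "z = w")
          case True thus ?thesis using \<open>y \<in> T\<close> Eyw by blast
        next
          case False thus ?thesis using Tdom z by blast
        qed
      qed
      hence "gamma E (V - {x}) \<le> card T" using gamma_le finW by blast
      thus False using cT1 by simp
    next
      case False
      have d1: "dominating E (V - {x}) (insert y T)"
        unfolding dominating_def
      proof (intro conjI ballI)
        show "insert y T \<subseteq> V - {x}" using TW yV y by blast
      next
        fix z assume z: "z \<in> V - {x} - insert y T"
        show "\<exists>u\<in>insert y T. E u z"
        proof (cases "z = w")
          case True thus ?thesis using Eyw by blast
        next
          case False thus ?thesis using Tdom z by blast
        qed
      qed
      have d2: "dominating E (V - {x}) (insert w T)"
        unfolding dominating_def
      proof (intro conjI ballI)
        show "insert w T \<subseteq> V - {x}" using TW wV wx by blast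
      next
        fix z assume z: "z \<in> V - {x} - insert w T"
        thus "\<exists>u\<in>insert w T. E u z" using Tdom by blast
      qed
      have "card (insert y T) = gamma E (V - {x})" using False finT cT1 by simp
      hence g1: "gamma_set E (V - {x}) (insert y T)" using d1 unfolding gamma_set_def by blast
      have "w \<notin> T" using TW by blast
      hence "card (insert w T) = gamma E (V - {x})" using finT cT1 by simp
      hence g2: "gamma_set E (V - {x}) (insert w T)" using d2 unfolding gamma_set_def by blast
      have "insert y T = insert w T" using Sx_uniq[OF xV g1] Sx_uniq[OF xV g2] by simp
      hence "y \<in> insert w T" by blast
      thus False using False yw by blast
    qed
  next
    case False
    hence only: "\<And>y. E w y \<Longrightarrow> y = x" by blast
    show False
    proof (cases "E w x")
      case True
      have "dominating E V (insert x T)"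
        unfolding dominating_def
      proof (intro conjI ballI)
        show "insert x T \<subseteq> V" using TW xV by blast
      next
        fix z assume z: "z \<in> V - insert x T"
        show "\<exists>u\<in>insert x T. E u z"
        proof (cases "z = w")
          case True thus ?thesis using \<open>E w x\<close> symE by blast
        next
          case False thus ?thesis using Tdom z by blast
        qed
      qed
      hence "gamma E V \<le> card (insert x T)" using gamma_le finV by blast
      also have "\<dots> \<le> card T + 1" using finT by (simp add: card_insert_if)
      finally show False using cT1 gx by simp
    next
      case False
      hence iso: "\<And>y. \<not> E y w" using only symE by blast
      obtain D1 D2 where D: "D1 \<noteq> D2" "gamma_set E V D1" "gamma_set E V D2" using two by blast
      have key: "w \<in> D \<and> D - {w} = Sx w" if Dg: "gamma_set E V D" for D
      proof -
        have wD: "w \<in> D" using gs_dom[OF Dg] wV iso unfolding dominating_def by blast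
        have "dominating E (V - {w}) (D - {w})"
          unfolding dominating_def
        proof (intro conjI ballI)
          show "D - {w} \<subseteq> V - {w}" using gs_sub[OF Dg] by blast
        next
          fix z assume z: "z \<in> V - {w} - (D - {w})"
          hence "z \<in> V - D" by blast
          then obtain u where u: "u \<in> D" "E u z" using gs_dom[OF Dg] unfolding dominating_def by blast
          have "u \<noteq> w" using u iso symE by blast
          thus "\<exists>u\<in>D - {w}. E u z" using u by blast
        qed
        moreover have "card (D - {w}) = gamma E (V - {w})"
          using gdel[OF wV] gs_card[OF Dg] gs_fin[OF Dg] wD by simp
        ultimately have "gamma_set E (V - {w}) (D - {w})" unfolding gamma_set_def by blast
        thus ?thesis using Sx_uniq[OF wV] wD by blast
      qed
      have k1: "w \<in> D1" "D1 - {w} = Sx w" using key[OF D(2)] by blast+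
      have k2: "w \<in> D2" "D2 - {w} = Sx w" using key[OF D(3)] by blast+
      have "D1 = insert w (D1 - {w})" using k1(1) by blast
      also have "\<dots> = insert w (D2 - {w})" using k1(2) k2(2) by simp
      also have "\<dots> = D2" using k2(1) by blast
      finally show False using D(1) by simp
    qed
  qed
qed

lemma partII:
  assumes xV: "x \<in> V" and yV: "y \<in> V" and xy: "x \<noteq> y"
  shows "gamma E (V - {x, y}) \<ge> gamma E V - 1
    \<and> (y \<notin> Sx x \<longrightarrow> gamma E (V - {x, y}) = gamma E V - 1)"
proof -
  have eq: "V - {x, y} = V - {x} - {y}" by blast
  have "\<not> gamma_critical E (V - {x}) y" using partI[OF xV] .
  hence "gamma E (V - {x} - {y}) \<ge> gamma E (V - {x})"
    using yV xy unfolding gamma_critical_def by auto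
  hence ge: "gamma E (V - {x, y}) \<ge> gamma E V - 1" using gdel[OF xV] eq by simp
  have "gamma E (V - {x, y}) \<le> gamma E V - 1" if yS: "y \<notin> Sx x"
  proof -
    have "dominating E (V - {x} - {y}) (Sx x)"
      by (rule dom_mono[OF Sx_dom[OF xV]]) (use Sx_sub[OF xV] yS in auto)
    moreover have "finite (V - {x} - {y})" using finV by simp
    ultimately have "gamma E (V - {x} - {y}) \<le> card (Sx x)" using gamma_le by blast
    thus ?thesis using Sx_card[OF xV] gdel[OF xV] eq by simp
  qed
  thus ?thesis using ge by simp
qed

end

theorem corollary3p3:
  fixes V :: "'a set" and E :: "'a \<Rightarrow> 'a \<Rightarrow> bool"
  assumes "simple_graph V E"
    and "hypo_unique V E"
    and "card V \<ge> 3"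
  shows "(\<forall>x \<in> V. \<forall>w. \<not> gamma_critical E (V - {x}) w)
       \<and> (\<forall>x \<in> V. \<forall>y \<in> V. x \<noteq> y \<longrightarrow>
            gamma E (V - {x, y}) \<ge> gamma E V - 1
          \<and> (y \<notin> (THE D. gamma_set E (V - {x}) D) \<longrightarrow> gamma E (V - {x, y}) = gamma E V - 1))"
proof -
  interpret HU V E using assms by unfold_locales
  show ?thesis using partI partII unfolding Sx_def by blast
qed

end
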